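(* Let $\Sigma$ be a finite alphabet. For any $L \subseteq \Sigma^*$ and $n \ge 0$, the language $L_n = \{w \in \Sigma^* : \mathrm{last}_n(w) \in L\}$ is $(2^{F_L(n)+1}-1)$-suffix testable.
   Context: Fix $a\in\Sigma$; $\mathrm{last}_n(a_1\cdots a_m)=a_{m-n+1}\cdots a_m$ if $n\le m$, else $a^{n-m}a_1\cdots a_m$. A fixed-size sliding window algorithm for $L$ is a sequence $(\mathcal{A}_n)_{n\ge0}$ of deterministic (possibly infinite-state) automata with injective encodings of their states into bit strings, $\mathcal{A}_n$ accepting $L_n$; its space complexity at $n$ is the maximal encoding length of a state of $\mathcal{A}_n$. $F_L(n)$ is the minimal space complexity at $n$ over all such algorithms. A language $K$ is $k$-suffix testable if for all $x,y\in\Sigma^*$ and $z\in\Sigma^k$: $xz\in K\iff yz\in K$. *)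

theory Defs
  imports Main "HOL-Library.Extended_Nat"
begin

text \<open>The alphabet is a finite type 'a; a is the fixed padding letter.\<close>

definition last_n :: "'a \<Rightarrow> nat \<Rightarrow> 'a list \<Rightarrow> 'a list" where
  "last_n a n w = (if n \<le> length w then drop (length w - n) w
                   else replicate (n - length w) a @ w)"

definition window_lang :: "'a \<Rightarrow> 'a list set \<Rightarrow> nat \<Rightarrow> 'a list set" where
  "window_lang a L n = {w. last_n a n w \<in> L}"

text \<open>Since the encoding must be injective, the state set is
  countable; we take states to be of type bool list (an arbitrary countable type),
  keeping the encoding as a separate component.\<close>

record ('a, 's) dfa =
  states :: "'s set"
  init :: 's
  delta :: "'s \<Rightarrow> 'a \<Rightarrow> 's"
  final :: "'s set"
  enc :: "'s \<Rightarrow> bool list"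

definition wf_dfa :: "('a, 's) dfa \<Rightarrow> bool" where
  "wf_dfa A \<longleftrightarrow> init A \<in> states A
     \<and> (\<forall>q\<in>states A. \<forall>c. delta A q c \<in> states A)
     \<and> final A \<subseteq> states A
     \<and> inj_on (enc A) (states A)"

definition dfa_lang :: "('a, 's) dfa \<Rightarrow> 'a list set" where
  "dfa_lang A = {w. foldl (delta A) (init A) w \<in> final A}"

definition space :: "('a, 's) dfa \<Rightarrow> enat" where
  "space A = (SUP q \<in> states A. enat (length (enc A q)))"

text \<open>F_L(n): minimal space complexity at n over all sliding window algorithms;
  only the n-th automaton matters, so this is the minimum over automata accepting L_n.\<close>
definition F_L :: "'a \<Rightarrow> 'a list set \<Rightarrow> nat \<Rightarrow> enat" where
  "F_L a L n = (INF A \<in> {A :: ('a, bool list) dfa. wf_dfa A \<and> dfa_lang A = window_lang a L n}.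
                  space A)"

definition suffix_testable :: "nat \<Rightarrow> 'a list set \<Rightarrow> bool" where
  "suffix_testable k K \<longleftrightarrow>
     (\<forall>x y z. length z = k \<longrightarrow> (x @ z \<in> K \<longleftrightarrow> y @ z \<in> K))"

end

theory Submission
  imports Defs
begin

lemma last_n_alt: "last_n a n w = rev (take n (rev w @ replicate n a))"
  unfolding last_n_def by (auto simp: take_rev take_append min_def)

lemma last_n_len: "length (last_n a n w) = n"
  by (simp add: last_n_alt)

lemma last_n_nil: "last_n a n [] = replicate n a"
  by (simp add: last_n_alt)

lemma last_n_snoc: "last_n a n (last_n a n w @ [c]) = last_n a n (w @ [c])"
  by (cases n) (simp_all add: last_n_alt take_append min_def)

lemma last_n_suffix: "n \<le> length z \<Longrightarrow> last_n a n (x @ z) = last_n a n z"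
  by (simp add: last_n_alt take_append)

definition EE :: "('a, 's) dfa \<Rightarrow> nat \<Rightarrow> ('s \<times> 's) set" where
  "EE A j = {(p,q). p \<in> states A \<and> q \<in> states A \<and>
     (\<forall>w. j \<le> length w \<longrightarrow> (foldl (delta A) p w \<in> final A \<longleftrightarrow> foldl (delta A) q w \<in> final A))}"

lemma fold_closed: "wf_dfa A \<Longrightarrow> p \<in> states A \<Longrightarrow> foldl (delta A) p w \<in> states A"
  by (induction w arbitrary: p) (auto simp: wf_dfa_def)

lemma EE_mono: "j \<le> k \<Longrightarrow> EE A j \<subseteq> EE A k"
  unfolding EE_def by auto

lemma EE_step: fixes A :: "('a, 's) dfa" assumes "wf_dfa A"
  shows "EE A (Suc j) = {(p,q). p \<in> states A \<and> q \<in> states A \<and> (\<forall>c. (delta A p c, delta A q c) \<in> EE A j)}"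
proof (intro set_eqI iffI)
  fix x assume "x \<in> EE A (Suc j)"
  then show "x \<in> {(p,q). p \<in> states A \<and> q \<in> states A \<and> (\<forall>c. (delta A p c, delta A q c) \<in> EE A j)}"
    using assms unfolding EE_def wf_dfa_def
    apply (auto)
     apply (metis Suc_le_mono foldl_Cons length_Cons)+
    done
next
  fix x assume "x \<in> {(p,q). p \<in> states A \<and> q \<in> states A \<and> (\<forall>c. (delta A p c, delta A q c) \<in> EE A j)}"
  then show "x \<in> EE A (Suc j)"
    unfolding EE_def
  proof (clarsimp)
    fix p q and w :: "'a list" assume h: "p \<in> states A" "q \<in> states A"
      "\<forall>c. delta A p c \<in> states A \<and> delta A q c \<in> states A \<and>
         (\<forall>w. j \<le> length w \<longrightarrow> (foldl (delta A) (delta A p c) w \<in> final A) = (foldl (delta A) (delta A q c) w \<in> final A))"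
      "Suc j \<le> length w"
    then obtain c w' where "w = c # w'" by (cases w) auto
    with h show "(foldl (delta A) p w \<in> final A) = (foldl (delta A) q w \<in> final A)" by auto
  qed
qed

lemma EE_stable:
  assumes "wf_dfa A" "EE A j = EE A (Suc j)"
  shows "EE A (j + d) = EE A j"
proof -
  have "EE A (d + j) = EE A (Suc (d + j))" for d
  proof (induction d)
    case 0 then show ?case using assms by simp
  next
    case (Suc d)
    show ?case using Suc EE_step[OF assms(1), of "d + j"] EE_step[OF assms(1), of "Suc (d + j)"]
      by simp
  qed
  then show ?thesis by (induction d) (simp_all add: add.commute)
qed

lemma EE_equiv: "equiv (states A) (EE A j)"
  unfolding equiv_def refl_on_def sym_def trans_def EE_def by auto

lemma card_quot_less:
  assumes fin: "finite S" and e: "equiv S E" and e': "equiv S E'" and sub: "E \<subseteq> E'" and ne: "E \<noteq> E'"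
  shows "card (S//E') < card (S//E)"
proof -
  define g where "g X = E' `` X" for X
  have cls: "E' `` (E `` {x}) = E' `` {x}" if "x \<in> S" for x
  proof
    show "E' `` (E `` {x}) \<subseteq> E' `` {x}"
      using sub e' unfolding equiv_def trans_def by blast
    show "E' `` {x} \<subseteq> E' `` (E `` {x})"
      using e that unfolding equiv_def refl_on_def by blast
  qed
  have img: "S//E' = g ` (S//E)"
    unfolding quotient_def g_def using cls by auto
  obtain p q where pq: "(p,q) \<in> E'" "(p,q) \<notin> E" using sub ne by auto
  have pS: "p \<in> S" "q \<in> S" using pq e' unfolding equiv_def refl_on_def by auto
  have neq: "E `` {p} \<noteq> E `` {q}" using eq_equiv_class_iff[OF e pS] pq by simp
  have geq: "g (E `` {p}) = g (E `` {q})"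
    using cls pS eq_equiv_class_iff[OF e' pS] pq unfolding g_def by simp
  have "\<not> inj_on g (S//E)"
    using neq geq pS unfolding inj_on_def quotient_def by blast
  moreover have finq: "finite (S//E)" using finite_quotient[OF fin] e unfolding equiv_def refl_on_def by blast
  ultimately have "card (g ` (S//E)) \<noteq> card (S//E)" using inj_on_iff_eq_card by blast
  then show ?thesis using img card_image_le[OF finq, of g] by simp
qed

lemma card_quot_le: "finite S \<Longrightarrow> card (S//E) \<le> card S"
  unfolding quotient_def by (metis UNION_singleton_eq_range card_image_le)

lemma card_quot_pos: "finite S \<Longrightarrow> S \<noteq> {} \<Longrightarrow> equiv S E \<Longrightarrow> card (S//E) > 0"
proof -
  assume "finite S" "S \<noteq> {}" "equiv S E"
  then have "finite (S//E)" using finite_quotient unfolding equiv_def refl_on_def by blast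
  moreover have "S//E \<noteq> {}" using \<open>S \<noteq> {}\<close> by (simp add: quotient_def)
  ultimately show ?thesis by auto
qed

lemma chain_stab:
  fixes E :: "nat \<Rightarrow> ('s \<times> 's) set"
  assumes fin: "finite S" and ne: "S \<noteq> {}" and eq: "\<And>j. equiv S (E j)" and mono: "\<And>j. E j \<subseteq> E (Suc j)"
  shows "\<exists>i\<le>card S. E i = E (Suc i)"
proof (rule ccontr)
  assume nst: "\<not> ?thesis"
  have "j \<le> card S \<longrightarrow> card (S//E j) + j \<le> card S" for j
  proof (induction j)
    case 0 then show ?case using card_quot_le[OF fin] by simp
  next
    case (Suc j)
    show ?case
    proof
      assume "Suc j \<le> card S"
      then have "E j \<noteq> E (Suc j)" using nst by auto
      then have "card (S//E (Suc j)) < card (S//E j)"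
        using card_quot_less[OF fin eq eq mono] by blast
      then show "card (S//E (Suc j)) + Suc j \<le> card S" using Suc \<open>Suc j \<le> card S\<close> by simp
    qed
  qed
  then have "card (S//E (card S)) = 0" by force
  moreover have "card (S//E (card S)) > 0" using card_quot_pos[OF fin ne eq] .
  ultimately show False by simp
qed

lemma sum_pow2: "(\<Sum>i\<le>m. (2::nat)^i) = 2^(m+1) - 1"
  by (induction m) auto

lemma card_bool_lists: "card {xs :: bool list. length xs \<le> m} = 2^(m+1) - 1"
  using card_lists_length_le[of "UNIV :: bool set" m] by (simp add: sum_pow2)

lemma finite_bool_lists: "finite {xs :: bool list. length xs \<le> m}"
  using finite_lists_length_le[of "UNIV :: bool set" m] by simp

lemma good_dfa:
  fixes a :: "'a::finite"
  shows "\<exists>A :: ('a, bool list) dfa. wf_dfa A \<and> dfa_lang A = window_lang a L n \<and> space A \<noteq> \<infinity>"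
proof -
  define W where "W = {w :: 'a list. length w = n}"
  have finW: "finite W" using finite_lists_length_eq[of "UNIV :: 'a set" n] unfolding W_def by simp
  obtain f k where fk: "f ` W = {i::nat. i < k}" "inj_on f W"
    using finite_imp_inj_to_nat_seg[OF finW] by blast
  define h where "h w = replicate (f w) True" for w
  have injh: "inj_on h W" using fk(2) unfolding h_def inj_on_def by auto
  define g where "g = the_inv_into W h"
  have gh: "g (h v) = v" if "v \<in> W" for v
    using the_inv_into_f_f[OF injh that] unfolding g_def .
  define A :: "('a, bool list) dfa" where
    "A = \<lparr>states = h ` W, init = h (replicate n a), delta = (\<lambda>q c. h (last_n a n (g q @ [c]))),
          final = h ` (W \<inter> L), enc = id\<rparr>"
  have lnW: "last_n a n w \<in> W" for w by (simp add: W_def last_n_len)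
  have run: "foldl (delta A) (init A) w = h (last_n a n w)" for w
  proof (induction w rule: rev_induct)
    case Nil then show ?case by (simp add: A_def last_n_nil)
  next
    case (snoc c w)
    then show ?case by (simp add: A_def gh[OF lnW] last_n_snoc)
  qed
  have wf: "wf_dfa A" unfolding wf_dfa_def A_def using lnW by (auto simp: W_def)
  have lang: "dfa_lang A = window_lang a L n"
  proof -
    have "h (last_n a n w) \<in> h ` (W \<inter> L) \<longleftrightarrow> last_n a n w \<in> L" for w
      using inj_on_image_mem_iff[OF injh lnW, of "W \<inter> L"] lnW by auto
    then show ?thesis unfolding dfa_lang_def window_lang_def using run by (simp add: A_def)
  qed
  have "space A \<le> enat k"
    unfolding space_def
  proof (rule SUP_least)
    fix q assume "q \<in> states A"
    then obtain w where "w \<in> W" "q = h w" by (auto simp: A_def)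
    then have "f w < k" using fk(1) by auto
    then show "enat (length (enc A q)) \<le> enat k" using \<open>q = h w\<close> by (simp add: A_def h_def)
  qed
  then have "space A \<noteq> \<infinity>" by (cases "space A") auto
  with wf lang show ?thesis by blast
qed

theorem theorem6p3:
  fixes a :: "'a::finite" and L :: "'a list set" and n :: nat
  shows "\<exists>m. F_L a L n = enat m \<and> suffix_testable (2 ^ (m + 1) - 1) (window_lang a L n)"
proof -
  define X where "X = {A :: ('a, bool list) dfa. wf_dfa A \<and> dfa_lang A = window_lang a L n}"
  obtain A0 where A0: "A0 \<in> X" "space A0 \<noteq> \<infinity>" using good_dfa[of a L n] unfolding X_def by blast
  have FL: "F_L a L n = Inf (space ` X)" unfolding F_L_def X_def by simp
  have "Inf (space ` X) \<in> space ` X"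
    unfolding Inf_enat_def using A0 by (auto intro: LeastI)
  then obtain A where A: "A \<in> X" "F_L a L n = space A" using FL by auto
  have "space A \<le> space A0" using A FL A0(1) by (metis Inf_lower image_eqI)
  then obtain m where m: "space A = enat m" using A0(2) by (cases "space A") auto
  have wf: "wf_dfa A" and lang: "dfa_lang A = window_lang a L n" using A(1) unfolding X_def by auto
  define S where "S = states A"
  have lenb: "length (enc A q) \<le> m" if "q \<in> S" for q
  proof -
    have "enat (length (enc A q)) \<le> space A" unfolding space_def using that S_def by (rule_tac SUP_upper) auto
    then show ?thesis using m by simp
  qed
  have injS: "inj_on (enc A) S" using wf unfolding wf_dfa_def S_def by auto
  have sub: "enc A ` S \<subseteq> {xs. length xs \<le> m}" using lenb by auto
  have finS: "finite S" using finite_subset[OF sub finite_bool_lists] finite_image_iff[OF injS] by blast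
  have cardS: "card S \<le> 2^(m+1) - 1"
    using card_mono[OF finite_bool_lists sub] card_image[OF injS] card_bool_lists[of m] by simp
  have neS: "S \<noteq> {}" using wf unfolding wf_dfa_def S_def by auto
  have "\<exists>i\<le>card S. EE A i = EE A (Suc i)"
    by (rule chain_stab[OF finS neS]) (simp_all add: S_def EE_equiv EE_mono)
  then obtain i where i: "i \<le> card S" "EE A i = EE A (Suc i)" by blast
  define k where "k = (2::nat)^(m+1) - 1"
  have stab: "EE A j = EE A i" if "i \<le> j" for j
    using EE_stable[OF wf i(2), of "j - i"] that by simp
  have reach: "(foldl (delta A) (init A) x, foldl (delta A) (init A) y) \<in> EE A n" for x y
  proof -
    have key: "foldl (delta A) (init A) (u @ w) \<in> final A \<longleftrightarrow> last_n a n w \<in> L" if "n \<le> length w" for u w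
    proof -
      have "foldl (delta A) (init A) (u @ w) \<in> final A \<longleftrightarrow> u @ w \<in> dfa_lang A"
        by (simp add: dfa_lang_def)
      also have "\<dots> \<longleftrightarrow> last_n a n (u @ w) \<in> L" by (simp add: lang window_lang_def)
      also have "\<dots> \<longleftrightarrow> last_n a n w \<in> L" by (simp add: last_n_suffix[OF that])
      finally show ?thesis .
    qed
    moreover have "init A \<in> states A" using wf unfolding wf_dfa_def by auto
    ultimately show ?thesis unfolding EE_def using fold_closed[OF wf] key
      by (simp del: foldl_append add: foldl_append[symmetric])
  qed
  have "EE A n \<subseteq> EE A k"
  proof -
    have "EE A n \<subseteq> EE A (max n k)" by (rule EE_mono) simp
    also have "\<dots> = EE A i" using stab[of "max n k"] i(1) cardS k_def by simp
    also have "\<dots> = EE A k" using stab[of k] i(1) cardS k_def by simp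
    finally show ?thesis .
  qed
  then have "suffix_testable k (window_lang a L n)"
    unfolding suffix_testable_def
  proof (intro allI impI)
    fix x y z :: "'a list" assume "EE A n \<subseteq> EE A k" "length z = k"
    then have "(foldl (delta A) (init A) x, foldl (delta A) (init A) y) \<in> EE A k" using reach by blast
    then have "foldl (delta A) (init A) (x @ z) \<in> final A \<longleftrightarrow> foldl (delta A) (init A) (y @ z) \<in> final A"
      unfolding EE_def using \<open>length z = k\<close> by simp
    then show "x @ z \<in> window_lang a L n \<longleftrightarrow> y @ z \<in> window_lang a L n"
      using lang unfolding dfa_lang_def by blast
  qed
  then show ?thesis using A(2) m k_def by auto
qed

end
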